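(* Let $n\ge3$ and let $(c(t),\xi(t))$ be a $C^1$ solution of the Hamiltonian system below. Define $$l_3=\bar\xi_3+2c_1\bar\xi_4+\dots+(n-2)c_{n-3}\bar\xi_n .$$ Then (i) $\dot l_1=\bar l_2\,l_3$ and $\dot l_2=-\bar l_1\,l_3$; (ii) $|l_1|^2+|l_2|^2$ is constant in $t$, and consequently the energy $\frac12\bigl(|u_1|^2+|u_2|^2\bigr)$ with $u_1=\dot c_1$, $u_2=\dot c_2-2c_1\dot c_1$ (equivalently the Carnot–Carathéodory length of the tangent vector $\dot c=u_1L_1+u_2L_2$, with $L_1,L_2$ orthonormal) is conserved along the solution.
   Context: Complex-valued functions $c_1,\dots,c_n,\xi_1,\dots,\xi_n$ of a real variable $t$; $l_1=\bar\xi_1+2c_1\bar\xi_2+\dots+nc_{n-1}\bar\xi_n$, $l_2=\bar\xi_2+2c_1\bar\xi_3+\dots+(n-1)c_{n-2}\bar\xi_n$. The Hamiltonian system is $\dot c_1=\bar l_1$, $\dot c_2=2c_1\bar l_1+\bar l_2$, $\dot c_k=kc_{k-1}\bar l_1+(k-1)c_{k-2}\bar l_2$ ($k=3,\dots,n$), $\dot\xi_k=-(k+1)\xi_{k+1}l_1-(k+1)\xi_{k+2}l_2$ ($k=1,\dots,n-2$), $\dot\xi_{n-1}=-n\xi_nl_1$, $\dot\xi_n=0$. The vector fields are $L_j=\partial_j+\sum_{k=1}^{n-j}(k+1)c_k\partial_{j+k}$, $\partial_k=\partial/\partial c_k$. *)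

theory Defs
  imports "HOL-Analysis.Analysis"
begin

text \<open>Coefficient convention: c_0 = 1, so that
  l_j = conj(xi_j) + 2 c_1 conj(xi_(j+1)) + ... + (n-j+1) c_(n-j) conj(xi_n).\<close>

definition cc :: "(nat \<Rightarrow> complex) \<Rightarrow> nat \<Rightarrow> complex" where
  "cc c i = (if i = 0 then 1 else c i)"

definition lfun :: "nat \<Rightarrow> nat \<Rightarrow> (nat \<Rightarrow> complex) \<Rightarrow> (nat \<Rightarrow> complex) \<Rightarrow> complex" where
  "lfun n j c \<xi> = (\<Sum>k=j..n. of_nat (k - j + 1) * cc c (k - j) * cnj (\<xi> k))"

end

theory Submission
  imports Defs
begin
lemma tele2:
  fixes b :: "nat \<Rightarrow> complex"
  assumes "b 0 = 0" "b 1 = 0" "b n = 0" "b (Suc n) = 0"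
  shows "(\<Sum>m<n. b m - b (m+2)) = 0"
proof -
  have "(\<Sum>m<n. b m - b (m+2)) = (\<Sum>m<n. b m - b (Suc m)) + (\<Sum>m<n. b (Suc m) - b (Suc (Suc m)))"
    by (simp add: sum.distrib[symmetric])
  also have "\<dots> = 0"
    using sum_lessThan_telescope'[of b n] sum_lessThan_telescope'[of "\<lambda>m. b (Suc m)" n] assms by simp
  finally show ?thesis .
qed

lemma key:
  fixes C x dC dx :: "nat \<Rightarrow> complex" and A B :: complex and n :: nat
  assumes xz: "\<And>k. k > n \<Longrightarrow> x k = 0"
    and C0: "C 0 = 1" and dC0: "dC 0 = 0" and dC1: "1 < n \<Longrightarrow> dC 1 = A"
    and dCS: "\<And>m. m + 2 < n \<Longrightarrow> dC (m+2) = of_nat (m+2) * C (m+1) * A + of_nat (m+1) * C m * B"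
    and dxk: "\<And>k. 1 \<le> k \<Longrightarrow> dx k = - (of_nat (k+1) * x (k+1) * A) - of_nat (k+1) * x (k+2) * B"
  shows "(\<Sum>m<n. of_nat (m+1) * (dC m * x (m+1) + C m * dx (m+1))) = B * (\<Sum>m<n. of_nat (m+1) * C m * x (m+3))"
    and "(\<Sum>m<n. of_nat (m+1) * (dC m * x (m+2) + C m * dx (m+2))) = - (A * (\<Sum>m<n. of_nat (m+1) * C m * x (m+3)))"
proof -
  define dCf where "dCf m = of_nat m * C (m-1) * A + of_nat (m-1) * C (m-2) * B" for m
  have dCe: "dC m = dCf m" if "m < n" for m
  proof (cases m)
    case 0 then show ?thesis by (simp add: dC0 dCf_def)
  next
    case (Suc k) then show ?thesis
    proof (cases k)
      case 0 then show ?thesis using Suc that dC1 C0 by (simp add: dCf_def)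
    next
      case (Suc j) then show ?thesis using \<open>m = Suc k\<close> that dCS[of j]
        by (simp add: dCf_def numeral_2_eq_2 add.commute)
    qed
  qed
  define a where "a m = of_nat (m+1) * of_nat m * C (m-1) * x (m+1)" for m
  define b where "b m = of_nat (m+1) * of_nat (m-1) * C (m-2) * x (m+1)" for m
  have t1: "of_nat (m+1) * (dCf m * x (m+1) + C m * dx (m+1))
     = A * (a m - a (Suc m)) + B * (b m - b (m+2)) + B * (of_nat (m+1) * C m * x (m+3))" for m
  proof (cases m)
    case 0 then show ?thesis by (simp add: dCf_def a_def b_def dxk algebra_simps numeral_eq_Suc)
  next
    case (Suc k) then show ?thesis
    proof (cases k)
      case 0 then show ?thesis using Suc by (simp add: dCf_def a_def b_def dxk algebra_simps numeral_eq_Suc)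
    next
      case (Suc j) then show ?thesis using \<open>m = Suc k\<close>
        by (simp add: dCf_def a_def b_def dxk algebra_simps numeral_eq_Suc)
    qed
  qed
  have "(\<Sum>m<n. of_nat (m+1) * (dC m * x (m+1) + C m * dx (m+1)))
     = (\<Sum>m<n. A * (a m - a (Suc m)) + B * (b m - b (m+2)) + B * (of_nat (m+1) * C m * x (m+3)))"
    by (rule sum.cong[OF refl]) (use dCe t1 in auto)
  also have "\<dots> = A * (\<Sum>m<n. a m - a (Suc m)) + B * (\<Sum>m<n. b m - b (m+2)) + B * (\<Sum>m<n. of_nat (m+1) * C m * x (m+3))"
    by (simp add: sum.distrib sum_distrib_left)
  also have "(\<Sum>m<n. a m - a (Suc m)) = 0"
    using sum_lessThan_telescope'[of a n] by (simp add: a_def xz)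
  also have "(\<Sum>m<n. b m - b (m+2)) = 0"
    by (rule tele2) (simp_all add: b_def xz)
  finally show "(\<Sum>m<n. of_nat (m+1) * (dC m * x (m+1) + C m * dx (m+1))) = B * (\<Sum>m<n. of_nat (m+1) * C m * x (m+3))"
    by simp
  define q where "q m = of_nat (m+1) * of_nat m * C (m-1) * x (m+2)" for m
  define p where "p m = of_nat (m+1) * of_nat (m-1) * C (m-2) * x (m+2)" for m
  have t2: "of_nat (m+1) * (dCf m * x (m+2) + C m * dx (m+2))
     = A * (q m - q (Suc m)) + B * (p m - p (m+2)) - A * (of_nat (m+1) * C m * x (m+3))" for m
  proof (cases m)
    case 0 then show ?thesis by (simp add: dCf_def q_def p_def dxk algebra_simps numeral_eq_Suc)
  next
    case (Suc k) then show ?thesis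
    proof (cases k)
      case 0 then show ?thesis using Suc by (simp add: dCf_def q_def p_def dxk algebra_simps numeral_eq_Suc)
    next
      case (Suc j) then show ?thesis using \<open>m = Suc k\<close>
        by (simp add: dCf_def q_def p_def dxk algebra_simps numeral_eq_Suc)
    qed
  qed
  have "(\<Sum>m<n. of_nat (m+1) * (dC m * x (m+2) + C m * dx (m+2)))
     = (\<Sum>m<n. A * (q m - q (Suc m)) + B * (p m - p (m+2)) - A * (of_nat (m+1) * C m * x (m+3)))"
    by (rule sum.cong[OF refl]) (use dCe t2 in auto)
  also have "\<dots> = A * (\<Sum>m<n. q m - q (Suc m)) + B * (\<Sum>m<n. p m - p (m+2)) - A * (\<Sum>m<n. of_nat (m+1) * C m * x (m+3))"
    by (simp only: sum.distrib sum_subtractf sum_distrib_left right_diff_distrib)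
  also have "(\<Sum>m<n. q m - q (Suc m)) = 0"
    using sum_lessThan_telescope'[of q n] by (simp add: q_def xz)
  also have "(\<Sum>m<n. p m - p (m+2)) = 0"
    by (rule tele2) (simp_all add: p_def xz)
  finally show "(\<Sum>m<n. of_nat (m+1) * (dC m * x (m+2) + C m * dx (m+2))) = - (A * (\<Sum>m<n. of_nat (m+1) * C m * x (m+3)))"
    by simp
qed

lemma lfun_alt:
  assumes "1 \<le> j" "j \<le> n"
  shows "lfun n j c \<xi> = (\<Sum>m<n. of_nat (m+1) * cc c m * (if m+j \<le> n then cnj (\<xi> (m+j)) else 0))"
proof -
  have "(\<Sum>m<n. of_nat (m+1) * cc c m * (if m+j \<le> n then cnj (\<xi> (m+j)) else 0))
      = (\<Sum>m<n. if m \<in> {m. m+j \<le> n} then of_nat (m+1) * cc c m * cnj (\<xi> (m+j)) else 0)"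
    by (rule sum.cong) auto
  also have "\<dots> = (\<Sum>m\<in>{..<n} \<inter> {m. m+j \<le> n}. of_nat (m+1) * cc c m * cnj (\<xi> (m+j)))"
    by (simp only: sum.inter_restrict[symmetric] finite_lessThan)
  also have "{..<n} \<inter> {m. m+j \<le> n} = {0..n-j}" using assms by auto
  also have "(\<Sum>m\<in>{0..n-j}. of_nat (m+1) * cc c m * cnj (\<xi> (m+j)))
     = (\<Sum>k\<in>{0+j..(n-j)+j}. of_nat (k-j+1) * cc c (k-j) * cnj (\<xi> k))"
    by (subst sum.shift_bounds_cl_nat_ivl) simp
  also have "{0+j..(n-j)+j} = {j..n}" using assms by auto
  finally show ?thesis unfolding lfun_def by simp
qed

lemma hvd_eq: "(f has_vector_derivative a) F \<Longrightarrow> a = b \<Longrightarrow> (f has_vector_derivative b) F"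
  by simp

theorem proposition5:
  fixes n :: nat and I :: "real set"
    and c \<xi> c' \<xi>' :: "real \<Rightarrow> nat \<Rightarrow> complex"
  assumes n3: "n \<ge> 3"
    and I: "is_interval I"
    and dc: "\<And>t k. t \<in> I \<Longrightarrow> 1 \<le> k \<Longrightarrow> k \<le> n \<Longrightarrow>
               ((\<lambda>s. c s k) has_vector_derivative c' t k) (at t within I)"
    and d\<xi>: "\<And>t k. t \<in> I \<Longrightarrow> 1 \<le> k \<Longrightarrow> k \<le> n \<Longrightarrow>
               ((\<lambda>s. \<xi> s k) has_vector_derivative \<xi>' t k) (at t within I)"
    and ode_c1: "\<And>t. t \<in> I \<Longrightarrow> c' t 1 = cnj (lfun n 1 (c t) (\<xi> t))"
    and ode_c2: "\<And>t. t \<in> I \<Longrightarrow>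
               c' t 2 = 2 * c t 1 * cnj (lfun n 1 (c t) (\<xi> t)) + cnj (lfun n 2 (c t) (\<xi> t))"
    and ode_ck: "\<And>t k. t \<in> I \<Longrightarrow> 3 \<le> k \<Longrightarrow> k \<le> n \<Longrightarrow>
               c' t k = of_nat k * c t (k - 1) * cnj (lfun n 1 (c t) (\<xi> t))
                        + of_nat (k - 1) * c t (k - 2) * cnj (lfun n 2 (c t) (\<xi> t))"
    and ode_\<xi>k: "\<And>t k. t \<in> I \<Longrightarrow> 1 \<le> k \<Longrightarrow> k \<le> n - 2 \<Longrightarrow>
               \<xi>' t k = - (of_nat (k + 1) * \<xi> t (k + 1) * lfun n 1 (c t) (\<xi> t))
                        - of_nat (k + 1) * \<xi> t (k + 2) * lfun n 2 (c t) (\<xi> t)"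
    and ode_\<xi>n1: "\<And>t. t \<in> I \<Longrightarrow> \<xi>' t (n - 1) = - (of_nat n * \<xi> t n * lfun n 1 (c t) (\<xi> t))"
    and ode_\<xi>n: "\<And>t. t \<in> I \<Longrightarrow> \<xi>' t n = 0"
  shows "(\<forall>t\<in>I.
            ((\<lambda>s. lfun n 1 (c s) (\<xi> s)) has_vector_derivative
                 cnj (lfun n 2 (c t) (\<xi> t)) * lfun n 3 (c t) (\<xi> t)) (at t within I)
          \<and> ((\<lambda>s. lfun n 2 (c s) (\<xi> s)) has_vector_derivative
                 - (cnj (lfun n 1 (c t) (\<xi> t)) * lfun n 3 (c t) (\<xi> t))) (at t within I))
       \<and> (\<exists>C. \<forall>t\<in>I. (cmod (lfun n 1 (c t) (\<xi> t)))\<^sup>2 + (cmod (lfun n 2 (c t) (\<xi> t)))\<^sup>2 = C)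
       \<and> (\<exists>E. \<forall>t\<in>I. ((cmod (c' t 1))\<^sup>2 + (cmod (c' t 2 - 2 * c t 1 * c' t 1))\<^sup>2) / 2 = E)"
proof -
  define L where "L j s = lfun n j (c s) (\<xi> s)" for j s
  define X where "X s k = (if k \<le> n then cnj (\<xi> s k) else 0)" for s k
  have Lalt: "L j s = (\<Sum>m<n. of_nat (m+1) * cc (c s) m * X s (m+j))" if "1 \<le> j" "j \<le> n" for j s
    unfolding L_def X_def using lfun_alt[OF that] by simp
  have deriv: "((\<lambda>s. L 1 s) has_vector_derivative cnj (L 2 t) * L 3 t) (at t within I)
             \<and> ((\<lambda>s. L 2 s) has_vector_derivative - (cnj (L 1 t) * L 3 t)) (at t within I)"
    if t: "t \<in> I" for t
  proof -
    define dC where "dC m = (if m = 0 then 0 else c' t m)" for m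
    define dX where "dX k = (if k \<le> n then cnj (\<xi>' t k) else 0)" for k
    have dCC: "((\<lambda>s. cc (c s) m) has_vector_derivative dC m) (at t within I)" if "m < n" for m
    proof (cases "m = 0")
      case True then show ?thesis by (simp add: cc_def dC_def)
    next
      case False then show ?thesis using dc[OF t, of m] that by (simp add: cc_def dC_def)
    qed
    have dXX: "((\<lambda>s. X s k) has_vector_derivative dX k) (at t within I)" if "1 \<le> k" for k
    proof (cases "k \<le> n")
      case True then show ?thesis
        using has_vector_derivative_cnj[OF d\<xi>[OF t that True]] by (simp add: X_def dX_def)
    next
      case False then show ?thesis by (simp add: X_def dX_def)
    qed
    have dL: "((\<lambda>s. L j s) has_vector_derivative
        (\<Sum>m<n. of_nat (m+1) * (dC m * X t (m+j) + cc (c t) m * dX (m+j)))) (at t within I)"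
      if "1 \<le> j" "j \<le> n" for j
    proof -
      have "((\<lambda>s. \<Sum>m<n. of_nat (m+1) * cc (c s) m * X s (m+j)) has_vector_derivative
        (\<Sum>m<n. of_nat (m+1) * (dC m * X t (m+j) + cc (c t) m * dX (m+j)))) (at t within I)"
      proof (rule has_vector_derivative_sum)
        fix m assume "m \<in> {..<n}"
        then have "m < n" by simp
        have "((\<lambda>s. of_nat (m+1) * (cc (c s) m * X s (m+j))) has_vector_derivative
               of_nat (m+1) * (cc (c t) m * dX (m+j) + dC m * X t (m+j))) (at t within I)"
          by (intro has_vector_derivative_mult_right has_vector_derivative_mult dCC dXX \<open>m < n\<close>)
             (use that in simp)
        then show "((\<lambda>s. of_nat (m+1) * cc (c s) m * X s (m+j)) has_vector_derivative
               of_nat (m+1) * (dC m * X t (m+j) + cc (c t) m * dX (m+j))) (at t within I)"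
          by (simp add: algebra_simps)
      qed
      then show ?thesis using Lalt[OF that] by simp
    qed
    have L3: "L 3 t = (\<Sum>m<n. of_nat (m+1) * cc (c t) m * X t (m+3))"
      using Lalt[of 3] n3 by simp
    have xz: "\<And>k. k > n \<Longrightarrow> X t k = 0" by (simp add: X_def)
    have C0: "cc (c t) 0 = 1" by (simp add: cc_def)
    have dC0: "dC 0 = 0" by (simp add: dC_def)
    have dC1: "dC 1 = cnj (L 1 t)" using ode_c1[OF t] by (simp add: dC_def L_def)
    have dCS: "dC (m+2) = of_nat (m+2) * cc (c t) (m+1) * cnj (L 1 t) + of_nat (m+1) * cc (c t) m * cnj (L 2 t)"
      if "m + 2 < n" for m
    proof (cases "m = 0")
      case True then show ?thesis using ode_c2[OF t] by (simp add: dC_def L_def cc_def numeral_2_eq_2)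
    next
      case False then show ?thesis using ode_ck[OF t, of "m+2"] that
        by (simp add: dC_def L_def cc_def algebra_simps)
    qed
    have dxk: "dX k = - (of_nat (k+1) * X t (k+1) * cnj (L 1 t)) - of_nat (k+1) * X t (k+2) * cnj (L 2 t)"
      if "1 \<le> k" for k
    proof -
      consider "k \<le> n - 2" | "k = n - 1" | "k = n" | "k > n" by linarith
      then show ?thesis
      proof cases
        case 1
        then have "k \<le> n" "Suc k \<le> n" "Suc (Suc k) \<le> n" using n3 by linarith+
        then show ?thesis using ode_\<xi>k[OF t that 1] by (simp add: dX_def X_def L_def)
      next
        case 2 then show ?thesis using ode_\<xi>n1[OF t] n3 by (simp add: dX_def X_def L_def)
      next
        case 3 then show ?thesis using ode_\<xi>n[OF t] n3 by (simp add: dX_def X_def L_def)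
      next
        case 4 then show ?thesis by (simp add: dX_def X_def)
      qed
    qed
    note K = key[of n "X t" "cc (c t)" dC "cnj (L 1 t)" "cnj (L 2 t)" dX, OF xz C0 dC0 dC1 dCS dxk]
    show ?thesis
    proof
      show "((\<lambda>s. L 1 s) has_vector_derivative cnj (L 2 t) * L 3 t) (at t within I)"
        using dL[of 1] n3 K(1) L3 by simp
      show "((\<lambda>s. L 2 s) has_vector_derivative - (cnj (L 1 t) * L 3 t)) (at t within I)"
        using dL[of 2] n3 K(2) L3 by simp
    qed
  qed
  have part1: "\<forall>t\<in>I.
            ((\<lambda>s. lfun n 1 (c s) (\<xi> s)) has_vector_derivative
                 cnj (lfun n 2 (c t) (\<xi> t)) * lfun n 3 (c t) (\<xi> t)) (at t within I)
          \<and> ((\<lambda>s. lfun n 2 (c s) (\<xi> s)) has_vector_derivative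
                 - (cnj (lfun n 1 (c t) (\<xi> t)) * lfun n 3 (c t) (\<xi> t))) (at t within I)"
    using deriv unfolding L_def by blast
  define g where "g s = L 1 s * cnj (L 1 s) + L 2 s * cnj (L 2 s)" for s
  have "\<exists>K. \<forall>s\<in>I. g s = K"
  proof (rule has_derivative_zero_constant)
    show "convex I" using I by (simp add: is_interval_convex)
    fix t assume t: "t \<in> I"
    note d = deriv[OF t]
    have d1: "((\<lambda>s. L 1 s * cnj (L 1 s)) has_vector_derivative
        (L 1 t * cnj (cnj (L 2 t) * L 3 t) + cnj (L 2 t) * L 3 t * cnj (L 1 t))) (at t within I)"
      by (intro has_vector_derivative_mult has_vector_derivative_cnj d[THEN conjunct1])
    have d2: "((\<lambda>s. L 2 s * cnj (L 2 s)) has_vector_derivative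
        (L 2 t * cnj (- (cnj (L 1 t) * L 3 t)) + - (cnj (L 1 t) * L 3 t) * cnj (L 2 t))) (at t within I)"
      by (intro has_vector_derivative_mult has_vector_derivative_cnj d[THEN conjunct2])
    have "(g has_vector_derivative
        (L 1 t * cnj (cnj (L 2 t) * L 3 t) + cnj (L 2 t) * L 3 t * cnj (L 1 t))
        + (L 2 t * cnj (- (cnj (L 1 t) * L 3 t)) + - (cnj (L 1 t) * L 3 t) * cnj (L 2 t))) (at t within I)"
      unfolding g_def by (rule has_vector_derivative_add[OF d1 d2])
    then have "(g has_vector_derivative 0) (at t within I)"
      by (rule hvd_eq) (simp add: algebra_simps)
    then show "(g has_derivative (\<lambda>h. 0)) (at t within I)"
      by (simp add: has_vector_derivative_def)
  qed
  then obtain K where K: "\<And>s. s \<in> I \<Longrightarrow> g s = K" by blast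
  have nsq: "(cmod (L 1 s))\<^sup>2 + (cmod (L 2 s))\<^sup>2 = Re (g s)" for s
    unfolding g_def using complex_norm_square[of "L 1 s"] complex_norm_square[of "L 2 s"]
    by (metis plus_complex.sel(1) Re_complex_of_real)
  have part2: "\<forall>t\<in>I. (cmod (lfun n 1 (c t) (\<xi> t)))\<^sup>2 + (cmod (lfun n 2 (c t) (\<xi> t)))\<^sup>2 = Re K"
    using nsq K unfolding L_def by simp
  have part3: "\<forall>t\<in>I. ((cmod (c' t 1))\<^sup>2 + (cmod (c' t 2 - 2 * c t 1 * c' t 1))\<^sup>2) / 2 = Re K / 2"
  proof
    fix t assume t: "t \<in> I"
    have "c' t 2 - 2 * c t 1 * c' t 1 = cnj (lfun n 2 (c t) (\<xi> t))"
      using ode_c1[OF t] ode_c2[OF t] by simp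
    then show "((cmod (c' t 1))\<^sup>2 + (cmod (c' t 2 - 2 * c t 1 * c' t 1))\<^sup>2) / 2 = Re K / 2"
      using part2 t ode_c1[OF t] by simp
  qed
  show ?thesis using part1 part2 part3 by blast
qed

end
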